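(* Let $\mathcal{X}\subseteq\mathcal{B}(0,R)$ be compact convex, $\mathcal{Z}$ a set and $f:\mathcal{X}\times\mathcal{Z}\to\mathbb{R}$ with $f(\cdot,z)\in\mathcal{F}^0_{\mathcal{X}}(L)$ for all $z$. Let $\boldsymbol{\pi}$ be a uniformly random permutation of $[n]$, let $(\eta_t)_{t\in[T]}$ be a non-increasing sequence of positive step sizes, and suppose $T\le n$. For fixed-permutation SGD $\mathcal{A}_{\sf PerSGD}$ and any neighboring datasets $S\simeq S'$, $$\mathbb{E}\big[\|\mathcal{A}_{\sf PerSGD}(S)-\mathcal{A}_{\sf PerSGD}(S')\|\big]\le\min\Big\{2R,\;\sqrt2L\frac{T-1}{n}\sqrt{\sum_{t=1}^{T-1}\eta_t^2}\Big\}.$$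
   Context: $\mathcal{F}^0_{\mathcal{X}}(L)$ is the class of convex $L$-Lipschitz functions on $\mathcal{X}$ (Lipschitz on an open set containing $\mathcal{X}$, so subgradients have norm at most $L$). $\mathcal{A}_{\sf PerSGD}$ on $S=(z_1,\dots,z_n)$: from a fixed initial point $x^1\in\mathcal{X}$, $x^{t+1}=\mathsf{Proj}_{\mathcal{X}}(x^t-\eta_t\nabla f(x^t,z_{\boldsymbol{\pi}(t)}))$ for $t=1,\dots,T-1$, where $\nabla f(x,z)$ is a fixed selection of a subgradient; output the weighted average $\frac{1}{\sum_t\eta_t}\sum_{t\in[T]}\eta_tx^t$. The runs on $S$ and $S'$ use the same initial point and the same $\boldsymbol{\pi}$; the expectation is over $\boldsymbol{\pi}$. $S\simeq S'$ means the datasets differ in at most one entry. *)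

theory Defs
  imports "HOL-Analysis.Analysis" "HOL-Combinatorics.Permutations"
begin

definition convex_lipschitz_class :: "'a::euclidean_space set \<Rightarrow> real \<Rightarrow> ('a \<Rightarrow> real) set" where
  "convex_lipschitz_class X L =
     {h. convex_on X h \<and> (\<exists>U. open U \<and> X \<subseteq> U \<and> L-lipschitz_on U h)}"

definition is_subgradient :: "'a::euclidean_space set \<Rightarrow> ('a \<Rightarrow> real) \<Rightarrow> 'a \<Rightarrow> 'a \<Rightarrow> bool" where
  "is_subgradient X h x v \<longleftrightarrow> (\<forall>y\<in>X. h y \<ge> h x + inner v (y - x))"

text \<open>Iterates of permuted SGD: persgd_iter ... k is the iterate x^(k+1);
  x^(t+1) = Proj_X (x^t - eta t * grad(x^t, S (perm t))).\<close>
fun persgd_iter :: "'a::euclidean_space set \<Rightarrow> ('a \<Rightarrow> 'z \<Rightarrow> 'a) \<Rightarrow> (nat \<Rightarrow> real)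
    \<Rightarrow> (nat \<Rightarrow> 'z) \<Rightarrow> (nat \<Rightarrow> nat) \<Rightarrow> 'a \<Rightarrow> nat \<Rightarrow> 'a" where
  "persgd_iter X g eta S perm x1 0 = x1"
| "persgd_iter X g eta S perm x1 (Suc k) =
     closest_point X (persgd_iter X g eta S perm x1 k
        - eta (Suc k) *\<^sub>R g (persgd_iter X g eta S perm x1 k) (S (perm (Suc k))))"

definition persgd :: "'a::euclidean_space set \<Rightarrow> ('a \<Rightarrow> 'z \<Rightarrow> 'a) \<Rightarrow> (nat \<Rightarrow> real)
    \<Rightarrow> nat \<Rightarrow> 'a \<Rightarrow> (nat \<Rightarrow> nat) \<Rightarrow> (nat \<Rightarrow> 'z) \<Rightarrow> 'a" where
  "persgd X g eta T x1 perm S =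
     (1 / (\<Sum>t=1..T. eta t)) *\<^sub>R (\<Sum>t=1..T. eta t *\<^sub>R persgd_iter X g eta S perm x1 (t - 1))"

definition neighbouring :: "nat \<Rightarrow> (nat \<Rightarrow> 'z) \<Rightarrow> (nat \<Rightarrow> 'z) \<Rightarrow> bool" where
  "neighbouring n S S' \<longleftrightarrow> (\<exists>i. \<forall>j\<in>{1..n}. j \<noteq> i \<longrightarrow> S j = S' j)"

end

theory Submission
  imports Defs
begin

lemma iter_in_X:
  assumes "closed X" "X \<noteq> {}" "x1 \<in> X"
  shows "persgd_iter X g eta S perm x1 k \<in> X"
  using assms by (cases k) (auto intro: closest_point_in_set)

lemma step_same:
  fixes X :: "'a::euclidean_space set"
  assumes "convex X" "closed X" "X \<noteq> {}" "x \<in> X" "y \<in> X" "e \<ge> 0"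
    and sgx: "is_subgradient X h x gx" and sgy: "is_subgradient X h y gy"
    and "norm gx \<le> L" "norm gy \<le> L"
  shows "(norm (closest_point X (x - e *\<^sub>R gx) - closest_point X (y - e *\<^sub>R gy)))\<^sup>2
          \<le> (norm (x - y))\<^sup>2 + 4 * L\<^sup>2 * e\<^sup>2"
proof -
  have m: "inner (gx - gy) (x - y) \<ge> 0"
  proof -
    have "h y \<ge> h x + inner gx (y - x)" using sgx assms(5) unfolding is_subgradient_def by blast
    moreover have "h x \<ge> h y + inner gy (x - y)" using sgy assms(4) unfolding is_subgradient_def by blast
    ultimately show ?thesis by (simp add: inner_diff_left inner_diff_right inner_commute)
  qed
  have ng: "norm (gx - gy) \<le> 2 * L"
    using norm_triangle_ineq4[of gx gy] assms(9,10) by linarith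
  have L0: "0 \<le> L" using assms(9) norm_ge_zero order_trans by blast
  have "norm (closest_point X (x - e *\<^sub>R gx) - closest_point X (y - e *\<^sub>R gy))
        \<le> norm ((x - e *\<^sub>R gx) - (y - e *\<^sub>R gy))"
    using closest_point_lipschitz[OF assms(1-3)] by (simp add: dist_norm)
  hence "(norm (closest_point X (x - e *\<^sub>R gx) - closest_point X (y - e *\<^sub>R gy)))\<^sup>2
        \<le> (norm ((x - y) - e *\<^sub>R (gx - gy)))\<^sup>2"
    by (simp add: power_mono algebra_simps)
  also have "\<dots> = (norm (x - y))\<^sup>2 - 2 * e * inner (gx - gy) (x - y) + e\<^sup>2 * (norm (gx - gy))\<^sup>2"
    unfolding power2_norm_eq_inner by (simp add: inner_diff_left inner_diff_right inner_commute algebra_simps power2_eq_square)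
  also have "\<dots> \<le> (norm (x - y))\<^sup>2 + e\<^sup>2 * (2 * L)\<^sup>2"
  proof -
    have "e\<^sup>2 * (norm (gx - gy))\<^sup>2 \<le> e\<^sup>2 * (2 * L)\<^sup>2"
      by (intro mult_left_mono power_mono ng) auto
    moreover have "2 * e * inner (gx - gy) (x - y) \<ge> 0" using m assms(6) by simp
    ultimately show ?thesis by linarith
  qed
  finally show ?thesis by (simp add: power_mult_distrib mult.commute)
qed

lemma step_diff:
  fixes X :: "'a::euclidean_space set"
  assumes "convex X" "closed X" "X \<noteq> {}" "e \<ge> 0"
    and "norm gx \<le> L" "norm gy \<le> L"
  shows "(norm (closest_point X (x - e *\<^sub>R gx) - closest_point X (x - e *\<^sub>R gy)))\<^sup>2
          \<le> 4 * L\<^sup>2 * e\<^sup>2"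
proof -
  have ng: "norm (gx - gy) \<le> 2 * L"
    using norm_triangle_ineq4[of gx gy] assms(5,6) by linarith
  have "norm (closest_point X (x - e *\<^sub>R gx) - closest_point X (x - e *\<^sub>R gy))
        \<le> norm ((x - e *\<^sub>R gx) - (x - e *\<^sub>R gy))"
    using closest_point_lipschitz[OF assms(1-3), of "x - e *\<^sub>R gx" "x - e *\<^sub>R gy"] by (simp only: dist_norm)
  also have "\<dots> = e * norm (gx - gy)" using assms(4)
    by (metis abs_of_nonneg diff_diff_eq2 add_diff_cancel_left' norm_minus_commute norm_scaleR scaleR_right_diff_distrib)
  also have "\<dots> \<le> e * (2 * L)" using ng assms(4) by (simp add: mult_left_mono)
  finally have "norm (closest_point X (x - e *\<^sub>R gx) - closest_point X (x - e *\<^sub>R gy)) \<le> e * (2 * L)" .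
  hence "(norm (closest_point X (x - e *\<^sub>R gx) - closest_point X (x - e *\<^sub>R gy)))\<^sup>2 \<le> (e * (2 * L))\<^sup>2"
    by (simp add: power_mono)
  thus ?thesis by (simp add: power_mult_distrib mult.commute)
qed

lemma iter_diff:
  fixes X :: "'a::euclidean_space set"
  assumes cvx: "convex X" and cl: "closed X" and ne: "X \<noteq> {}" and x1: "x1 \<in> X"
   and sg: "\<And>x z. x \<in> X \<Longrightarrow> is_subgradient X (\<lambda>y. f y z) x (g x z)"
   and gL: "\<And>x z. x \<in> X \<Longrightarrow> norm (g x z) \<le> L"
   and eta: "\<And>k. k \<in> {1..T} \<Longrightarrow> eta k > 0"
   and dat: "\<And>k. k \<in> {1..T-1} \<Longrightarrow> k \<noteq> t \<Longrightarrow> S (perm k) = S' (perm k)"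
  shows "k \<le> T - 1 \<Longrightarrow> (k < t \<longrightarrow> persgd_iter X g eta S perm x1 k = persgd_iter X g eta S' perm x1 k)
     \<and> (norm (persgd_iter X g eta S perm x1 k - persgd_iter X g eta S' perm x1 k))\<^sup>2
         \<le> 4 * L\<^sup>2 * (\<Sum>r=t..k. (eta r)\<^sup>2)"
proof (induction k)
  case 0
  have "0 \<le> (\<Sum>r=t..0. (eta r)\<^sup>2)" by (intro sum_nonneg) auto
  then show ?case by simp
next
  case (Suc k)
  define a where "a = persgd_iter X g eta S perm x1 k"
  define b where "b = persgd_iter X g eta S' perm x1 k"
  define z where "z = S (perm (Suc k))"
  define z' where "z' = S' (perm (Suc k))"
  define e where "e = eta (Suc k)"
  have IH: "(k < t \<longrightarrow> a = b) \<and> (norm (a - b))\<^sup>2 \<le> 4 * L\<^sup>2 * (\<Sum>r=t..k. (eta r)\<^sup>2)"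
    using Suc unfolding a_def b_def by simp
  have aX: "a \<in> X" unfolding a_def using iter_in_X[OF cl ne x1] by blast
  have bX: "b \<in> X" unfolding b_def using iter_in_X[OF cl ne x1] by blast
  have e0: "e \<ge> 0" using eta[of "Suc k"] Suc.prems unfolding e_def by (simp add: less_imp_le)
  have A: "persgd_iter X g eta S perm x1 (Suc k) = closest_point X (a - e *\<^sub>R g a z)"
    by (simp add: a_def e_def z_def)
  have B: "persgd_iter X g eta S' perm x1 (Suc k) = closest_point X (b - e *\<^sub>R g b z')"
    by (simp add: b_def e_def z'_def)
  have s0: "0 \<le> (\<Sum>r=t..Suc k. (eta r)\<^sup>2)" by (intro sum_nonneg) auto
  consider "Suc k < t" | "Suc k = t" | "Suc k > t" by linarith
  then show ?case
  proof cases
    case 1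
    then have "z = z'" unfolding z_def z'_def using dat[of "Suc k"] Suc.prems by auto
    moreover have "a = b" using IH 1 by auto
    ultimately show ?thesis unfolding A B using s0 1 by simp
  next
    case 2
    then have "a = b" using IH by auto
    have "(norm (closest_point X (a - e *\<^sub>R g a z) - closest_point X (a - e *\<^sub>R g a z')))\<^sup>2
          \<le> 4 * L\<^sup>2 * e\<^sup>2"
      by (rule step_diff[OF cvx cl ne e0 gL[OF aX] gL[OF aX]])
    moreover have "(\<Sum>r=t..Suc k. (eta r)\<^sup>2) = e\<^sup>2" using 2 e_def by simp
    ultimately show ?thesis unfolding A B using 2 \<open>a = b\<close> by simp
  next
    case 3
    then have "z = z'" unfolding z_def z'_def using dat[of "Suc k"] Suc.prems by auto
    have "(norm (closest_point X (a - e *\<^sub>R g a z) - closest_point X (b - e *\<^sub>R g b z)))\<^sup>2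
          \<le> (norm (a - b))\<^sup>2 + 4 * L\<^sup>2 * e\<^sup>2"
      by (rule step_same[OF cvx cl ne aX bX e0 sg[OF aX] sg[OF bX] gL[OF aX] gL[OF bX]])
    moreover have "(\<Sum>r=t..Suc k. (eta r)\<^sup>2) = (\<Sum>r=t..k. (eta r)\<^sup>2) + e\<^sup>2" using 3 e_def by simp
    ultimately show ?thesis unfolding A B using 3 IH \<open>z = z'\<close> by (simp add: algebra_simps)
  qed
qed

lemma tail_avg:
  fixes eta :: "nat \<Rightarrow> real"
  assumes mono: "\<And>s t. 1 \<le> s \<Longrightarrow> s \<le> t \<Longrightarrow> t \<le> T \<Longrightarrow> eta t \<le> eta s"
    and t1: "1 \<le> t"
  shows "real T * (\<Sum>s=Suc t..T. eta s) \<le> real (T - t) * (\<Sum>s=1..T. eta s)"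
proof (cases "t < T")
  case False
  then show ?thesis by simp
next
  case True
  define a where "a = (\<Sum>s=1..t. eta s)"
  define b where "b = (\<Sum>s=Suc t..T. eta s)"
  define m where "m = eta (Suc t)"
  have split: "{1..T} = {1..t} \<union> {Suc t..T}" using True t1 by auto
  have tot: "(\<Sum>s=1..T. eta s) = a + b"
    unfolding a_def b_def split by (rule sum.union_disjoint) auto
  have "real (card {1..t}) * m \<le> a"
    unfolding a_def m_def by (rule sum_bounded_below) (use True in \<open>auto intro!: mono\<close>)
  hence ha: "real t * m \<le> a" by simp
  have "b \<le> real (card {Suc t..T}) * m"
    unfolding b_def m_def by (rule sum_bounded_above) (use True in \<open>auto intro!: mono\<close>)
  hence hb: "b \<le> real (T - t) * m" by simp
  have "real t * b \<le> real t * (real (T - t) * m)" using hb by (simp add: mult_left_mono)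
  also have "\<dots> = real (T - t) * (real t * m)" by simp
  also have "\<dots> \<le> real (T - t) * a" using ha by (simp add: mult_left_mono)
  finally have 1: "real t * b \<le> real (T - t) * a" .
  have eq: "real T = real t + real (T - t)" using True by simp
  have "real T * b = real t * b + real (T - t) * b" unfolding eq by (rule distrib_right)
  also have "\<dots> \<le> real (T - t) * a + real (T - t) * b" using 1 by simp
  finally show ?thesis unfolding tot b_def[symmetric] by (simp only: distrib_left)
qed
lemma out_bound:
  fixes X :: "'a::euclidean_space set"
  assumes cvx: "convex X" and cl: "closed X" and ne: "X \<noteq> {}" and x1: "x1 \<in> X"
   and sg: "\<And>x z. x \<in> X \<Longrightarrow> is_subgradient X (\<lambda>y. f y z) x (g x z)"
   and gL: "\<And>x z. x \<in> X \<Longrightarrow> norm (g x z) \<le> L"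
   and eta: "\<And>k. k \<in> {1..T} \<Longrightarrow> eta k > 0"
   and dat: "\<And>k. k \<in> {1..T-1} \<Longrightarrow> k \<noteq> t \<Longrightarrow> S (perm k) = S' (perm k)"
   and mono: "\<And>s t. 1 \<le> s \<Longrightarrow> s \<le> t \<Longrightarrow> t \<le> T \<Longrightarrow> eta t \<le> eta s"
   and t1: "1 \<le> t" and T1: "1 \<le> T"
  shows "norm (persgd X g eta T x1 perm S - persgd X g eta T x1 perm S')
     \<le> 2 * L * sqrt (\<Sum>r=1..T-1. (eta r)\<^sup>2) * real (T - t) / real T"
proof -
  define x where "x = persgd_iter X g eta S perm x1"
  define y where "y = persgd_iter X g eta S' perm x1"
  define E where "E = (\<Sum>s=1..T. eta s)"
  define A where "A = (\<Sum>r=1..T-1. (eta r)\<^sup>2)"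
  define C where "C = 2 * L * sqrt A"
  have L0: "0 \<le> L" using gL[OF x1] norm_ge_zero order_trans by blast
  have E0: "E > 0" unfolding E_def using T1 eta by (intro sum_pos) auto
  have C0: "C \<ge> 0" unfolding C_def A_def using L0 by (intro mult_nonneg_nonneg) (auto intro: sum_nonneg)
  have dlt: "norm (x (s - 1) - y (s - 1)) \<le> (if t < s then C else 0)" if s: "s \<in> {1..T}" for s
  proof -
    have k: "s - 1 \<le> T - 1" using s by auto
    have h: "(s - 1 < t \<longrightarrow> x (s - 1) = y (s - 1))
       \<and> (norm (x (s - 1) - y (s - 1)))\<^sup>2 \<le> 4 * L\<^sup>2 * (\<Sum>r=t..s-1. (eta r)\<^sup>2)"
      unfolding x_def y_def by (rule iter_diff[of X x1 f g L T eta t S perm S' "s - 1", OF cvx cl ne x1 sg gL eta dat k])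
    show ?thesis
    proof (cases "t < s")
      case False
      then have "s - 1 < t" using s t1 by auto
      then have "x (s - 1) = y (s - 1)" using h by blast
      then show ?thesis using False by simp
    next
      case True
      have "(\<Sum>r=t..s-1. (eta r)\<^sup>2) \<le> A"
        unfolding A_def using t1 k by (intro sum_mono2) auto
      hence "4 * L\<^sup>2 * (\<Sum>r=t..s-1. (eta r)\<^sup>2) \<le> 4 * L\<^sup>2 * A"
        by (intro mult_left_mono) auto
      hence "(norm (x (s - 1) - y (s - 1)))\<^sup>2 \<le> 4 * L\<^sup>2 * A"
        using h by linarith
      hence "norm (x (s - 1) - y (s - 1)) \<le> sqrt (4 * L\<^sup>2 * A)"
        by (rule real_le_rsqrt)
      also have "\<dots> = C" unfolding C_def using L0 by (simp add: real_sqrt_mult)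
      finally show ?thesis using True by simp
    qed
  qed
  have "persgd X g eta T x1 perm S - persgd X g eta T x1 perm S'
        = (1 / E) *\<^sub>R (\<Sum>s=1..T. eta s *\<^sub>R (x (s - 1) - y (s - 1)))"
    unfolding persgd_def x_def y_def E_def
    by (simp add: scaleR_diff_right sum_subtractf)
  hence "norm (persgd X g eta T x1 perm S - persgd X g eta T x1 perm S')
        = (1 / E) * norm (\<Sum>s=1..T. eta s *\<^sub>R (x (s - 1) - y (s - 1)))"
    using E0 by simp
  also have "\<dots> \<le> (1 / E) * (\<Sum>s=1..T. eta s * (if t < s then C else 0))"
  proof -
    have "norm (\<Sum>s=1..T. eta s *\<^sub>R (x (s - 1) - y (s - 1)))
          \<le> (\<Sum>s=1..T. norm (eta s *\<^sub>R (x (s - 1) - y (s - 1))))" by (rule norm_sum)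
    also have "\<dots> \<le> (\<Sum>s=1..T. eta s * (if t < s then C else 0))"
    proof (rule sum_mono)
      fix s assume s: "s \<in> {1..T}"
      have "norm (eta s *\<^sub>R (x (s - 1) - y (s - 1))) = eta s * norm (x (s - 1) - y (s - 1))"
        using eta[OF s] by simp
      also have "\<dots> \<le> eta s * (if t < s then C else 0)"
        using dlt[OF s] eta[OF s] by (intro mult_left_mono) auto
      finally show "norm (eta s *\<^sub>R (x (s - 1) - y (s - 1))) \<le> eta s * (if t < s then C else 0)" .
    qed
    finally show ?thesis using E0 by (simp add: divide_right_mono)
  qed
  also have "(\<Sum>s=1..T. eta s * (if t < s then C else 0)) = C * (\<Sum>s=Suc t..T. eta s)"
  proof -
    have "(\<Sum>s=1..T. eta s * (if t < s then C else 0)) = (\<Sum>s\<in>{1..T}. if t < s then eta s * C else 0)"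
      by (intro sum.cong) auto
    also have "\<dots> = (\<Sum>s\<in>{s\<in>{1..T}. t < s}. eta s * C)"
      by (rule sum.inter_filter[symmetric]) simp
    also have "{s\<in>{1..T}. t < s} = {Suc t..T}" using t1 by auto
    finally show ?thesis by (simp add: sum_distrib_left mult.commute)
  qed
  also have "(1 / E) * (C * (\<Sum>s=Suc t..T. eta s)) \<le> C * real (T - t) / real T"
  proof -
    have "real T * (\<Sum>s=Suc t..T. eta s) \<le> real (T - t) * E"
      unfolding E_def by (rule tail_avg[OF mono t1])
    hence "(\<Sum>s=Suc t..T. eta s) \<le> real (T - t) * E / real T"
      using T1 by (simp add: field_simps)
    hence "C * (\<Sum>s=Suc t..T. eta s) \<le> C * (real (T - t) * E / real T)"
      using C0 by (rule mult_left_mono)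
    thus ?thesis using E0 by (simp add: field_simps)
  qed
  finally show ?thesis unfolding C_def A_def .
qed

lemma perm_sym:
  fixes h :: "nat \<Rightarrow> real"
  assumes fin: "finite A" and i: "i \<in> A"
  shows "real (card A) * (\<Sum>p\<in>{p. p permutes A}. h (inv p i))
         = real (card {p. p permutes A}) * (\<Sum>u\<in>A. h u)"
proof -
  let ?P = "{p. p permutes A}"
  have 1: "(\<Sum>p\<in>?P. h (inv p i)) = (\<Sum>p\<in>?P. h (p i))"
    using sum_permutations_inverse[of "\<lambda>p. h (p i)" A] by simp
  have 2: "(\<Sum>p\<in>?P. h (p j)) = (\<Sum>p\<in>?P. h (p i))" if j: "j \<in> A" for j
    using sum_permutations_compose_right[OF permutes_swap_id[OF j i], of "\<lambda>p. h (p j)"]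
    by simp
  have "real (card A) * (\<Sum>p\<in>?P. h (p i)) = (\<Sum>j\<in>A. \<Sum>p\<in>?P. h (p j))"
    using 2 by simp
  also have "\<dots> = (\<Sum>p\<in>?P. \<Sum>j\<in>A. h (p j))" by (rule sum.swap)
  also have "\<dots> = (\<Sum>p\<in>?P. \<Sum>u\<in>A. h u)"
  proof (rule sum.cong[OF refl])
    fix p assume "p \<in> ?P"
    then have "p permutes A" by simp
    then show "(\<Sum>j\<in>A. h (p j)) = (\<Sum>u\<in>A. h u)"
      using sum.permute[of p A h] by (simp add: o_def)
  qed
  also have "\<dots> = real (card ?P) * (\<Sum>u\<in>A. h u)" by simp
  finally show ?thesis using 1 by simp
qed

lemma gauss_aux: "(\<Sum>u=1..T. real (T - u)) = real T * (real T - 1) / 2"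
proof (induction T)
  case 0
  then show ?case by simp
next
  case (Suc T)
  have "(\<Sum>u=1..Suc T. real (Suc T - u)) = (\<Sum>u=1..T. real (T - u) + 1) + 0"
    by (simp add: sum.cl_ivl_Suc Suc_diff_le of_nat_Suc algebra_simps)
  also have "\<dots> = real T * (real T - 1) / 2 + real T" using Suc by (simp add: sum.distrib)
  also have "\<dots> = real (Suc T) * (real (Suc T) - 1) / 2" by (simp add: field_simps)
  finally show ?case .
qed

lemma gauss_n:
  assumes "T \<le> n"
  shows "(\<Sum>u=1..n. real (T - u)) = real T * (real T - 1) / 2"
proof -
  have "(\<Sum>u=1..n. real (T - u)) = (\<Sum>u=1..T. real (T - u))"
    using assms by (intro sum.mono_neutral_right) auto
  then show ?thesis using gauss_aux by simp
qed

lemma out_norm: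
  fixes X :: "'a::euclidean_space set"
  assumes cl: "closed X" and ne: "X \<noteq> {}" and x1: "x1 \<in> X" and XR: "X \<subseteq> cball 0 R"
   and eta: "\<And>k. k \<in> {1..T} \<Longrightarrow> eta k > 0" and T1: "1 \<le> T"
  shows "norm (persgd X g eta T x1 perm S) \<le> R"
proof -
  define E where "E = (\<Sum>s=1..T. eta s)"
  have E0: "E > 0" unfolding E_def using T1 eta by (intro sum_pos) auto
  have "norm (\<Sum>s=1..T. eta s *\<^sub>R persgd_iter X g eta S perm x1 (s - 1))
        \<le> (\<Sum>s=1..T. norm (eta s *\<^sub>R persgd_iter X g eta S perm x1 (s - 1)))" by (rule norm_sum)
  also have "\<dots> \<le> (\<Sum>s=1..T. eta s * R)"
  proof (rule sum_mono)
    fix s assume s: "s \<in> {1..T}"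
    have "persgd_iter X g eta S perm x1 (s - 1) \<in> cball 0 R"
      using iter_in_X[OF cl ne x1] XR by blast
    hence "norm (persgd_iter X g eta S perm x1 (s - 1)) \<le> R" by simp
    thus "norm (eta s *\<^sub>R persgd_iter X g eta S perm x1 (s - 1)) \<le> eta s * R"
      using eta[OF s] by (simp add: mult_left_mono)
  qed
  also have "\<dots> = E * R" unfolding E_def by (simp add: sum_distrib_right)
  finally have "norm (\<Sum>s=1..T. eta s *\<^sub>R persgd_iter X g eta S perm x1 (s - 1)) \<le> E * R" .
  then show ?thesis unfolding persgd_def E_def[symmetric] using E0
    by (simp add: field_simps)
qed


theorem theoremA2:
  fixes X :: "'a::euclidean_space set" and R L :: real
    and f :: "'a \<Rightarrow> 'z \<Rightarrow> real" and g :: "'a \<Rightarrow> 'z \<Rightarrow> 'a"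
    and eta :: "nat \<Rightarrow> real" and n T :: nat and x1 :: 'a
    and S S' :: "nat \<Rightarrow> 'z"
  assumes "compact X" and "convex X" and "X \<subseteq> cball 0 R"
    and "\<And>z. (\<lambda>x. f x z) \<in> convex_lipschitz_class X L"
    and "\<And>x z. x \<in> X \<Longrightarrow> is_subgradient X (\<lambda>y. f y z) x (g x z)"
    and "\<And>x z. x \<in> X \<Longrightarrow> norm (g x z) \<le> L"
    and "\<And>t. t \<in> {1..T} \<Longrightarrow> eta t > 0"
    and "\<And>s t. 1 \<le> s \<Longrightarrow> s \<le> t \<Longrightarrow> t \<le> T \<Longrightarrow> eta t \<le> eta s"
    and "1 \<le> T" and "T \<le> n"
    and "x1 \<in> X"
    and "neighbouring n S S'"
  shows "(\<Sum>\<pi>\<in>{p. p permutes {1..n}}.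
            norm (persgd X g eta T x1 \<pi> S - persgd X g eta T x1 \<pi> S'))
          / real (card {p. p permutes {1..n}})
         \<le> min (2 * R) (sqrt 2 * L * (real (T - 1) / real n) * sqrt (\<Sum>t=1..T-1. (eta t)\<^sup>2))"
proof -
  note cvx = assms(2)
  have cl: "closed X" using assms(1) compact_imp_closed by blast
  have ne: "X \<noteq> {}" using assms(11) by blast
  note x1 = assms(11) and sg = assms(5) and gL = assms(6) and eta = assms(7) and mono = assms(8)
  note T1 = assms(9) and Tn = assms(10)
  define P where "P = {p. p permutes {1..n::nat}}"
  define D where "D = (\<lambda>\<pi>. norm (persgd X g eta T x1 \<pi> S - persgd X g eta T x1 \<pi> S'))"
  define A where "A = (\<Sum>t=1..T-1. (eta t)\<^sup>2)"
  define B where "B = sqrt 2 * L * (real (T - 1) / real n) * sqrt A"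
  define C where "C = 2 * L * sqrt A"
  have L0: "0 \<le> L" using gL[OF x1] norm_ge_zero order_trans by blast
  have R0: "0 \<le> R" using x1 assms(3) by (meson mem_cball_0 norm_ge_zero order_trans subsetD)
  have A0: "0 \<le> A" unfolding A_def by (intro sum_nonneg) auto
  have n0: "n > 0" using T1 Tn by simp
  have finP: "finite P" unfolding P_def by (rule finite_permutations) simp
  have cardP: "real (card P) > 0" unfolding P_def using card_permutations[of "{1..n}" n] by simp
  have B0: "B \<ge> 0" unfolding B_def using L0 A0 by simp
  have part1: "(\<Sum>\<pi>\<in>P. D \<pi>) \<le> real (card P) * (2 * R)"
  proof -
    have "(\<Sum>\<pi>\<in>P. D \<pi>) \<le> (\<Sum>\<pi>\<in>P. 2 * R)"
    proof (rule sum_mono)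
      fix \<pi> assume "\<pi> \<in> P"
      have "D \<pi> \<le> norm (persgd X g eta T x1 \<pi> S) + norm (persgd X g eta T x1 \<pi> S')"
        unfolding D_def by (rule norm_triangle_ineq4)
      also have "\<dots> \<le> R + R"
        using out_norm[where eta=eta and T=T and g=g and perm=\<pi> and S=S, OF cl ne x1 assms(3) eta T1]
              out_norm[where eta=eta and T=T and g=g and perm=\<pi> and S=S', OF cl ne x1 assms(3) eta T1] by linarith
      finally show "D \<pi> \<le> 2 * R" by simp
    qed
    then show ?thesis by simp
  qed
  have part2: "(\<Sum>\<pi>\<in>P. D \<pi>) \<le> real (card P) * B"
  proof -
    obtain i where i: "\<And>j. j \<in> {1..n} \<Longrightarrow> j \<noteq> i \<Longrightarrow> S j = S' j"
      using assms(12) unfolding neighbouring_def by blast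
    show ?thesis
    proof (cases "i \<in> {1..n}")
      case False
      have "D \<pi> \<le> 0" if "\<pi> \<in> P" for \<pi>
      proof -
        have p: "\<pi> permutes {1..n}" using that P_def by simp
        have dat: "S (\<pi> k) = S' (\<pi> k)" if "k \<in> {1..T-1}" "k \<noteq> T" for k
        proof -
          have "k \<in> {1..n}" using that Tn by auto
          then have "\<pi> k \<in> {1..n}" using permutes_in_image[OF p] by blast
          then show ?thesis using i False by metis
        qed
        have "D \<pi> \<le> 2 * L * sqrt A * real (T - T) / real T"
          unfolding D_def A_def
          by (rule out_bound[of X x1 f g L T eta T S \<pi> S', OF cvx cl ne x1 sg gL eta dat mono T1 T1])
        then show ?thesis by simp
      qed
      then have "(\<Sum>\<pi>\<in>P. D \<pi>) \<le> 0" by (meson sum_nonpos)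
      also have "0 \<le> real (card P) * B" using B0 cardP by simp
      finally show ?thesis .
    next
      case True
      define h where "h = (\<lambda>u. C * real (T - u) / real T)"
      have Dle: "D \<pi> \<le> h (inv \<pi> i)" if "\<pi> \<in> P" for \<pi>
      proof -
        have p: "\<pi> permutes {1..n}" using that P_def by simp
        have tin: "inv \<pi> i \<in> {1..n}"
          using permutes_in_image[OF permutes_inv[OF p]] True by blast
        have dat: "S (\<pi> k) = S' (\<pi> k)" if "k \<in> {1..T-1}" "k \<noteq> inv \<pi> i" for k
        proof -
          have "k \<in> {1..n}" using that Tn by auto
          then have "\<pi> k \<in> {1..n}" using permutes_in_image[OF p] by blast
          moreover have "\<pi> k \<noteq> i"
            using that(2) permutes_inverses(2)[OF p, of k] by metis
          ultimately show ?thesis using i by metis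
        qed
        have t1: "1 \<le> inv \<pi> i" using tin by simp
        show ?thesis
          unfolding D_def h_def C_def A_def
          by (rule out_bound[of X x1 f g L T eta "inv \<pi> i" S \<pi> S', OF cvx cl ne x1 sg gL eta dat mono t1 T1])
      qed
      have s1: "(\<Sum>\<pi>\<in>P. D \<pi>) \<le> (\<Sum>\<pi>\<in>P. h (inv \<pi> i))" by (rule sum_mono) (rule Dle)
      have ps: "real n * (\<Sum>\<pi>\<in>P. h (inv \<pi> i)) = real (card P) * (\<Sum>u=1..n. h u)"
        using perm_sym[of "{1..n}" i h] True unfolding P_def by simp
      have s2: "(\<Sum>u=1..n. h u) = (C / real T) * (\<Sum>u=1..n. real (T - u))"
        unfolding h_def by (simp add: sum_distrib_left)
      have s3: "(\<Sum>u=1..n. h u) = C * (real T - 1) / 2"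
        unfolding s2 gauss_n[OF Tn] using T1 by (simp add: field_simps)
      have Tm: "real (T - 1) = real T - 1" using T1 by simp
      have x0: "0 \<le> L * (real (T - 1) / real n) * sqrt A"
        using L0 A0 by (intro mult_nonneg_nonneg) auto
      have "1 \<le> sqrt (2::real)" by simp
      from mult_right_mono[OF this x0]
      have s4: "L * (real (T - 1) / real n) * sqrt A \<le> B"
        unfolding B_def by (simp add: mult.assoc)
      have "real n * (\<Sum>\<pi>\<in>P. D \<pi>) \<le> real (card P) * (C * (real T - 1) / 2)"
        using s1 ps s3 n0 by (metis mult_left_mono of_nat_0_le_iff)
      also have "\<dots> = real n * (real (card P) * (L * (real (T - 1) / real n) * sqrt A))"
        unfolding Tm C_def using n0 by (simp add: field_simps)
      also have "\<dots> \<le> real n * (real (card P) * B)"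
        using s4 cardP by (intro mult_left_mono) auto
      finally show ?thesis using n0 by simp
    qed
  qed
  have "(\<Sum>\<pi>\<in>P. D \<pi>) / real (card P) \<le> 2 * R"
    using part1 cardP by (simp add: divide_le_eq mult.commute)
  moreover have "(\<Sum>\<pi>\<in>P. D \<pi>) / real (card P) \<le> B"
    using part2 cardP by (simp add: divide_le_eq mult.commute)
  ultimately show ?thesis unfolding P_def D_def B_def A_def by simp
qed

end
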